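(* Let $\mathbb{T}$ be a time scale, $c\in\mathbb{R}$ a constant, $m\in\mathbb{N}$ ($m\ge1$), $\alpha\in\,]0,1]$, and $t\in\mathbb{T}_\kappa$. (i) If $f(t)=(t-c)^m$, then $$f^{\nabla^\alpha}(t)=\begin{cases}[t-\rho(t)]^{1-\alpha}\sum_{\nu=0}^{m-1}[\rho(t)-c]^\nu(t-c)^{m-1-\nu}&\text{if }\alpha\neq1,\\ \sum_{\nu=0}^{m-1}[\rho(t)-c]^\nu(t-c)^{m-1-\nu}&\text{if }\alpha=1.\end{cases}$$ (ii) If $g(t)=\frac1{(t-c)^m}$, then, provided $[\rho(t)-c](t-c)\neq0$, $$g^{\nabla^\alpha}(t)=\begin{cases}-[t-\rho(t)]^{1-\alpha}\sum_{\nu=0}^{m-1}\frac{1}{[\rho(t)-c]^{m-\nu}(t-c)^{\nu+1}}&\text{if }\alpha\neq1,\\ -\sum_{\nu=0}^{m-1}\frac{1}{[\rho(t)-c]^{m-\nu}(t-c)^{\nu+1}}&\text{if }\alpha=1.\end{cases}$$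
   Context: A time scale $\mathbb{T}$ is a nonempty closed subset of $\mathbb{R}$. $\rho(t)=\sup\{s\in\mathbb{T}: s<t\}$ (with $\sup\emptyset=\inf\mathbb{T}$), $\sigma(t)=\inf\{s\in\mathbb{T}:s>t\}$ (with $\inf\emptyset=\sup\mathbb{T}$), $f^\rho=f\circ\rho$. $\mathbb{T}_\kappa=\mathbb{T}\setminus\{\inf\mathbb{T}\}$ if $\inf\mathbb{T}$ is finite with $\sigma(\inf\mathbb{T})>\inf\mathbb{T}$, otherwise $\mathbb{T}_\kappa=\mathbb{T}$. $0^\gamma=0$ for $\gamma>0$. Let $A=\,]0,1]\cap\{1/q: q\text{ odd positive integer}\}$; for $\alpha=1/q\in A$, $x^\alpha$ is the real $q$-th root. For $t\in\mathbb{T}_\kappa$, $f^{\nabla^\alpha}(t)$ is the real number (if it exists) such that for every $\varepsilon>0$ there is $\delta>0$ with $\big|[f(s)-f^\rho(t)]-f^{\nabla^\alpha}(t)[s-\rho(t)]^\alpha\big|\le\varepsilon|s-\rho(t)|^\alpha$ for all $s\in\,]t-\delta,t+\delta[\,\cap\mathbb{T}$ if $\alpha\in A$, resp. all $s\in[t,t+\delta[\,\cap\mathbb{T}$ if $\alpha\notin A$ (nabla fractional derivative of order $\alpha$). *)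

theory Defs
  imports "HOL-Analysis.Analysis"
begin

definition time_scale :: "real set \<Rightarrow> bool" where
  "time_scale T \<longleftrightarrow> T \<noteq> {} \<and> closed T"

definition ts_rho :: "real set \<Rightarrow> real \<Rightarrow> real" where
  "ts_rho T t = (if {s \<in> T. s < t} = {} then Inf T else Sup {s \<in> T. s < t})"

definition ts_sigma :: "real set \<Rightarrow> real \<Rightarrow> real" where
  "ts_sigma T t = (if {s \<in> T. s > t} = {} then Sup T else Inf {s \<in> T. s > t})"

definition ts_kappa :: "real set \<Rightarrow> real set" where
  "ts_kappa T = (if bdd_below T \<and> ts_sigma T (Inf T) > Inf T then T - {Inf T} else T)"

definition odd_recip :: "real set" where
  "odd_recip = {a. \<exists>q::nat. odd q \<and> 0 < q \<and> a = 1 / real q}"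

text \<open>x^alpha: real odd root for alpha in A (sgn x * |x|^(1/q)), otherwise powr
  (only used for nonnegative bases then; 0 powr a = 0).\<close>
definition frac_pow :: "real \<Rightarrow> real \<Rightarrow> real" where
  "frac_pow \<alpha> x = (if \<alpha> \<in> odd_recip then sgn x * \<bar>x\<bar> powr \<alpha> else x powr \<alpha>)"

definition has_nabla_frac :: "(real \<Rightarrow> real) \<Rightarrow> real \<Rightarrow> real \<Rightarrow> real set \<Rightarrow> real \<Rightarrow> bool" where
  "has_nabla_frac f \<alpha> D T t \<longleftrightarrow>
     (\<forall>\<epsilon>>0. \<exists>\<delta>>0. \<forall>s \<in> (if \<alpha> \<in> odd_recip then {t-\<delta><..<t+\<delta>} else {t..<t+\<delta>}) \<inter> T.
        \<bar>(f s - f (ts_rho T t)) - D * frac_pow \<alpha> (s - ts_rho T t)\<bar>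
          \<le> \<epsilon> * \<bar>s - ts_rho T t\<bar> powr \<alpha>)"

end

theory Submission
  imports Defs
begin

lemma frac_pow_pos: "0 < x \<Longrightarrow> frac_pow a x = x powr a"
  by (simp add: frac_pow_def)

lemma one_odd_recip: "(1::real) \<in> odd_recip"
  unfolding odd_recip_def by (auto intro!: exI[of _ "1::nat"])

lemma frac_pow_one: "frac_pow 1 x = x"
  using one_odd_recip by (simp add: frac_pow_def sgn_mult_abs)

lemma ev_to_delta:
  fixes t :: real
  assumes "eventually P (at t)" "P t"
  shows "\<exists>\<delta>>0. \<forall>s. \<bar>s - t\<bar> < \<delta> \<longrightarrow> P s"
proof -
  from assms(1) obtain d where "d > 0" "\<forall>x. x \<noteq> t \<and> dist x t < d \<longrightarrow> P x"
    unfolding eventually_at by auto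
  then show ?thesis using assms(2) by (metis dist_real_def)
qed

lemma generic:
  fixes f Q :: "real \<Rightarrow> real"
  assumes rho: "ts_rho T t = \<rho>" and le: "\<rho> \<le> t" and gap: "\<forall>s\<in>T. s < t \<longrightarrow> s \<le> \<rho>"
    and a: "0 < \<alpha>" "\<alpha> \<le> 1"
    and fq: "eventually (\<lambda>s. f s - f \<rho> = (s - \<rho>) * Q s) (nhds t)"
    and Qc: "isCont Q t"
  shows "has_nabla_frac f \<alpha> ((if \<alpha> \<noteq> 1 then (t - \<rho>) powr (1 - \<alpha>) else 1) * Q t) T t"
  unfolding has_nabla_frac_def rho
proof (intro allI impI)
  fix \<epsilon> :: real assume e: "\<epsilon> > 0"
  define D where "D = (if \<alpha> \<noteq> 1 then (t - \<rho>) powr (1 - \<alpha>) else 1) * Q t"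
  define P where "P = (\<lambda>s. s \<in> T \<longrightarrow> \<bar>f s - f \<rho> - D * frac_pow \<alpha> (s - \<rho>)\<bar> \<le> \<epsilon> * \<bar>s - \<rho>\<bar> powr \<alpha>)"
  have fq': "eventually (\<lambda>s. f s - f \<rho> = (s - \<rho>) * Q s) (at t)"
    using fq by (simp add: eventually_nhds_metric eventually_at) (metis dist_commute)
  have main: "\<exists>\<delta>>0. \<forall>s. \<bar>s - t\<bar> < \<delta> \<longrightarrow> P s"
  proof (cases "\<rho> < t")
    case True
    define d where "d = t - \<rho>"
    have d: "d > 0" using True d_def by simp
    define h where "h = (\<lambda>s. (s - \<rho>) * Q s - D * (s - \<rho>) powr \<alpha>)"
    have hc: "isCont h t" unfolding h_def using Qc True
      by (intro continuous_intros) auto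
    have "h t = 0"
    proof (cases "\<alpha> = 1")
      case True then show ?thesis using d d_def by (simp add: h_def D_def)
    next
      case False
      have "(t - \<rho>) powr (1 - \<alpha>) * (t - \<rho>) powr \<alpha> = t - \<rho>"
        using d d_def by (simp add: powr_add[symmetric])
      then have "Q t * ((t - \<rho>) powr (1 - \<alpha>) * (t - \<rho>) powr \<alpha>) = Q t * (t - \<rho>)" by simp
      then show ?thesis using False by (simp add: h_def D_def algebra_simps)
    qed
    then have "(h \<longlongrightarrow> 0) (at t)" using hc by (metis isCont_def)
    then have ev1: "eventually (\<lambda>s. \<bar>h s\<bar> < \<epsilon> * d powr \<alpha>) (at t)"
      using e d by (intro order_tendstoD(2)[OF tendsto_rabs_zero]) auto
    have ev2: "eventually (\<lambda>s. \<bar>s - t\<bar> < d) (at t)"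
      unfolding eventually_at using d by (auto simp: dist_real_def intro!: exI[of _ d])
    have ev: "eventually P (at t)"
      using ev1 ev2 fq'
    proof eventually_elim
      case (elim s)
      show "P s" unfolding P_def
      proof
        assume sT: "s \<in> T"
        have "s \<ge> t" using gap sT elim(2) d_def by force
        then have sp: "s - \<rho> > 0" using True by simp
        have "\<bar>f s - f \<rho> - D * frac_pow \<alpha> (s - \<rho>)\<bar> = \<bar>h s\<bar>"
          using elim(3) sp by (simp add: frac_pow_pos h_def)
        also have "\<dots> \<le> \<epsilon> * d powr \<alpha>" using elim(1) by simp
        also have "\<dots> \<le> \<epsilon> * \<bar>s - \<rho>\<bar> powr \<alpha>"
          using e d \<open>s \<ge> t\<close> d_def a by (intro mult_left_mono powr_mono2) auto
        finally show "\<bar>f s - f \<rho> - D * frac_pow \<alpha> (s - \<rho>)\<bar> \<le> \<epsilon> * \<bar>s - \<rho>\<bar> powr \<alpha>" .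
      qed
    qed
    have ft: "f t - f \<rho> = (t - \<rho>) * Q t" using fq by (rule eventually_nhds_x_imp_x)
    have "P t" unfolding P_def using \<open>h t = 0\<close> True ft e
      by (simp add: frac_pow_pos h_def)
    then show ?thesis using ev ev_to_delta by blast
  next
    case False
    then have rt: "\<rho> = t" using le by simp
    show ?thesis
    proof (cases "\<alpha> = 1")
      case True
      have DQ: "D = Q t" using True D_def by simp
      have "((\<lambda>s. Q s - Q t) \<longlongrightarrow> 0) (at t)"
        using Qc unfolding isCont_def by (simp add: LIM_zero)
      then have ev1: "eventually (\<lambda>s. \<bar>Q s - Q t\<bar> < \<epsilon>) (at t)"
        using e by (intro order_tendstoD(2)[OF tendsto_rabs_zero]) auto
      have ev: "eventually P (at t)"
        using ev1 fq'
      proof eventually_elim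
        case (elim s)
        have "\<bar>f s - f \<rho> - D * frac_pow \<alpha> (s - \<rho>)\<bar> = \<bar>s - t\<bar> * \<bar>Q s - Q t\<bar>"
          using elim(2) rt DQ True by (simp add: frac_pow_one abs_mult[symmetric] algebra_simps)
        also have "\<dots> \<le> \<bar>s - t\<bar> * \<epsilon>" using elim(1) by (intro mult_left_mono) auto
        finally show "P s" unfolding P_def using rt True by (simp add: mult.commute)
      qed
      have "P t" unfolding P_def using rt True by (simp add: frac_pow_one)
      then show ?thesis using ev ev_to_delta by blast
    next
      case False
      have D0: "D = 0" using False D_def rt by simp
      have "((\<lambda>s. \<bar>s - t\<bar> powr (1 - \<alpha>) * Q s) \<longlongrightarrow> 0 * Q t) (at t)"
      proof (intro tendsto_mult)
        show "((\<lambda>s. \<bar>s - t\<bar> powr (1 - \<alpha>)) \<longlongrightarrow> 0) (at t)"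
        proof (rule tendsto_zero_powrI)
          have "((\<lambda>s. \<bar>s - t\<bar>) \<longlongrightarrow> \<bar>t - t\<bar>) (at t)"
            by (intro tendsto_intros)
          then show "((\<lambda>s. \<bar>s - t\<bar>) \<longlongrightarrow> 0) (at t)" by simp
          show "((\<lambda>s. 1 - \<alpha>) \<longlongrightarrow> 1 - \<alpha>) (at t)" by simp
          show "\<forall>\<^sub>F s in at t. 0 \<le> \<bar>s - t\<bar>" by simp
          show "0 < 1 - \<alpha>" using a False by simp
        qed
        show "(Q \<longlongrightarrow> Q t) (at t)" using Qc by (simp add: isCont_def)
      qed
      then have ev1: "eventually (\<lambda>s. \<bar>\<bar>s - t\<bar> powr (1 - \<alpha>) * Q s\<bar> < \<epsilon>) (at t)"
        using e by (intro order_tendstoD(2)[OF tendsto_rabs_zero]) auto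
      have ev: "eventually P (at t)"
        using ev1 fq'
      proof eventually_elim
        case (elim s)
        show "P s"
        proof (cases "s = t")
          case True then show ?thesis unfolding P_def using rt D0 by simp
        next
          case ne: False
          have pos: "\<bar>s - t\<bar> > 0" using ne by simp
          have "\<bar>s - t\<bar> = \<bar>s - t\<bar> powr \<alpha> * \<bar>s - t\<bar> powr (1 - \<alpha>)"
            using pos by (simp add: powr_add[symmetric])
          then have "\<bar>f s - f \<rho> - D * frac_pow \<alpha> (s - \<rho>)\<bar> = \<bar>s - t\<bar> powr \<alpha> * \<bar>\<bar>s - t\<bar> powr (1 - \<alpha>) * Q s\<bar>"
            using elim(2) rt D0 by (simp add: abs_mult)
          also have "\<dots> \<le> \<bar>s - t\<bar> powr \<alpha> * \<epsilon>" using elim(1) by (intro mult_left_mono) auto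
          finally show "P s" unfolding P_def using rt by (simp add: mult.commute)
        qed
      qed
      have "P t" unfolding P_def using rt D0 by simp
      then show ?thesis using ev ev_to_delta by blast
    qed
  qed
  then obtain \<delta> where dpos: "\<delta> > 0" and hd: "\<forall>s. \<bar>s - t\<bar> < \<delta> \<longrightarrow> P s" by blast
  show "\<exists>\<delta>>0. \<forall>s\<in>(if \<alpha> \<in> odd_recip then {t - \<delta><..<t + \<delta>} else {t..<t + \<delta>}) \<inter> T.
          \<bar>f s - f \<rho> - D * frac_pow \<alpha> (s - \<rho>)\<bar> \<le> \<epsilon> * \<bar>s - \<rho>\<bar> powr \<alpha>"
  proof (intro exI[of _ \<delta>] conjI ballI)
    show "\<delta> > 0" by fact
    fix s assume s: "s \<in> (if \<alpha> \<in> odd_recip then {t - \<delta><..<t + \<delta>} else {t..<t + \<delta>}) \<inter> T"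
    then have "\<bar>s - t\<bar> < \<delta>" "s \<in> T" using dpos by (auto split: if_splits)
    then show "\<bar>f s - f \<rho> - D * frac_pow \<alpha> (s - \<rho>)\<bar> \<le> \<epsilon> * \<bar>s - \<rho>\<bar> powr \<alpha>"
      using hd unfolding P_def by blast
  qed
qed

lemma rho_facts:
  assumes "t \<in> T"
  shows "ts_rho T t \<le> t" "\<forall>s\<in>T. s < t \<longrightarrow> s \<le> ts_rho T t"
proof -
  show "ts_rho T t \<le> t"
  proof (cases "{s \<in> T. s < t} = {}")
    case True
    then have "bdd_below T" unfolding bdd_below_def by (metis (mono_tags, lifting) empty_Collect_eq not_le)
    then show ?thesis using True assms by (simp add: ts_rho_def cInf_lower)
  next
    case False
    then have "Sup {s \<in> T. s < t} \<le> t" by (intro cSup_least) auto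
    then show ?thesis using False unfolding ts_rho_def by presburger
  qed
  show "\<forall>s\<in>T. s < t \<longrightarrow> s \<le> ts_rho T t"
  proof (intro ballI impI)
    fix s assume "s \<in> T" "s < t"
    then have ne: "{s \<in> T. s < t} \<noteq> {}" by auto
    have "bdd_above {s \<in> T. s < t}" unfolding bdd_above_def by (auto intro!: exI[of _ t])
    then have "s \<le> Sup {s \<in> T. s < t}" using \<open>s \<in> T\<close> \<open>s < t\<close> by (intro cSup_upper) auto
    then show "s \<le> ts_rho T t" using ne unfolding ts_rho_def by presburger
  qed
qed

lemma pow_diff_id:
  fixes x y :: real
  assumes "1 \<le> m"
  shows "x ^ m - y ^ m = (x - y) * (\<Sum>\<nu>=0..m-1. y ^ \<nu> * x ^ (m - 1 - \<nu>))"
proof -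
  obtain n where m: "m = Suc n" using assms by (cases m) auto
  have "y ^ Suc n - x ^ Suc n = (y - x) * (\<Sum>p<Suc n. y ^ p * x ^ (n - p))"
    by (rule diff_power_eq_sum)
  moreover have "{0..m-1} = {..<Suc n}" using m by auto
  ultimately show ?thesis using m by (simp add: algebra_simps)
qed

lemma inv_pow_diff_id:
  fixes x y :: real
  assumes "1 \<le> m" "x \<noteq> 0" "y \<noteq> 0"
  shows "1 / x ^ m - 1 / y ^ m = (x - y) * - (\<Sum>\<nu>=0..m-1. 1 / (y ^ (m - \<nu>) * x ^ (\<nu> + 1)))"
proof -
  have trm: "1 / (y ^ (m - \<nu>) * x ^ (\<nu> + 1)) = y ^ \<nu> * x ^ (m - 1 - \<nu>) / (x ^ m * y ^ m)"
    if "\<nu> \<in> {0..m-1}" for \<nu>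
  proof -
    have "y ^ m = y ^ \<nu> * y ^ (m - \<nu>)" using that assms(1) by (simp add: power_add[symmetric])
    moreover have "x ^ m = x ^ (m - 1 - \<nu>) * x ^ (\<nu> + 1)"
      using that assms(1) unfolding power_add[symmetric] by (intro arg_cong[where f="\<lambda>k. x ^ k"]) auto
    ultimately show ?thesis using assms by (simp add: field_simps)
  qed
  have "(\<Sum>\<nu>=0..m-1. 1 / (y ^ (m - \<nu>) * x ^ (\<nu> + 1))) = (\<Sum>\<nu>=0..m-1. y ^ \<nu> * x ^ (m - 1 - \<nu>)) / (x ^ m * y ^ m)"
    unfolding sum_divide_distrib by (rule sum.cong[OF refl]) (rule trm)
  then have "(x - y) * - (\<Sum>\<nu>=0..m-1. 1 / (y ^ (m - \<nu>) * x ^ (\<nu> + 1))) = - (x ^ m - y ^ m) / (x ^ m * y ^ m)"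
    using pow_diff_id[OF assms(1), of x y] by simp
  also have "\<dots> = 1 / x ^ m - 1 / y ^ m" using assms by (simp add: field_simps)
  finally show ?thesis by simp
qed

theorem theorem3p11:
  fixes T :: "real set" and c \<alpha> t :: real and m :: nat
  assumes "time_scale T" and "1 \<le> m" and "0 < \<alpha>" and "\<alpha> \<le> 1"
    and "t \<in> ts_kappa T"
  shows "has_nabla_frac (\<lambda>s. (s - c) ^ m) \<alpha>
           ((if \<alpha> \<noteq> 1 then (t - ts_rho T t) powr (1 - \<alpha>) else 1) *
            (\<Sum>\<nu>=0..m-1. (ts_rho T t - c) ^ \<nu> * (t - c) ^ (m - 1 - \<nu>))) T t
    \<and> ((ts_rho T t - c) * (t - c) \<noteq> 0 \<longrightarrow>
         has_nabla_frac (\<lambda>s. 1 / (s - c) ^ m) \<alpha>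
           (- (if \<alpha> \<noteq> 1 then (t - ts_rho T t) powr (1 - \<alpha>) else 1) *
            (\<Sum>\<nu>=0..m-1. 1 / ((ts_rho T t - c) ^ (m - \<nu>) * (t - c) ^ (\<nu> + 1)))) T t)"
proof -
  define \<rho> where "\<rho> = ts_rho T t"
  have tT: "t \<in> T" using assms(5) by (auto simp: ts_kappa_def split: if_splits)
  note rf = rho_facts[OF tT, folded \<rho>_def]
  have part1: "has_nabla_frac (\<lambda>s. (s - c) ^ m) \<alpha>
           ((if \<alpha> \<noteq> 1 then (t - \<rho>) powr (1 - \<alpha>) else 1) *
            (\<lambda>s. \<Sum>\<nu>=0..m-1. (\<rho> - c) ^ \<nu> * (s - c) ^ (m - 1 - \<nu>)) t) T t"
  proof (rule generic[OF \<rho>_def[symmetric] rf(1) rf(2) assms(3) assms(4)])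
    show "\<forall>\<^sub>F s in nhds t. (s - c) ^ m - (\<rho> - c) ^ m = (s - \<rho>) * (\<Sum>\<nu>=0..m-1. (\<rho> - c) ^ \<nu> * (s - c) ^ (m - 1 - \<nu>))"
      using pow_diff_id[OF assms(2)] by (intro always_eventually allI) (metis diff_diff_cancel diff_diff_eq2 diff_add_cancel add_diff_cancel_right)
    show "isCont (\<lambda>s. \<Sum>\<nu>=0..m-1. (\<rho> - c) ^ \<nu> * (s - c) ^ (m - 1 - \<nu>)) t"
      by (intro continuous_intros)
  qed
  have part2: "has_nabla_frac (\<lambda>s. 1 / (s - c) ^ m) \<alpha>
           (- (if \<alpha> \<noteq> 1 then (t - \<rho>) powr (1 - \<alpha>) else 1) *
            (\<Sum>\<nu>=0..m-1. 1 / ((\<rho> - c) ^ (m - \<nu>) * (t - c) ^ (\<nu> + 1)))) T t"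
    if nz: "(\<rho> - c) * (t - c) \<noteq> 0"
  proof -
    have a: "\<rho> - c \<noteq> 0" "t - c \<noteq> 0" using nz by auto
    have "has_nabla_frac (\<lambda>s. 1 / (s - c) ^ m) \<alpha>
           ((if \<alpha> \<noteq> 1 then (t - \<rho>) powr (1 - \<alpha>) else 1) *
            (\<lambda>s. - (\<Sum>\<nu>=0..m-1. 1 / ((\<rho> - c) ^ (m - \<nu>) * (s - c) ^ (\<nu> + 1)))) t) T t"
    proof (rule generic[OF \<rho>_def[symmetric] rf(1) rf(2) assms(3) assms(4)])
      have "\<forall>\<^sub>F s in nhds t. s \<noteq> c" using a by (intro t1_space_nhds) simp
      then show "\<forall>\<^sub>F s in nhds t. 1 / (s - c) ^ m - 1 / (\<rho> - c) ^ m = (s - \<rho>) * - (\<Sum>\<nu>=0..m-1. 1 / ((\<rho> - c) ^ (m - \<nu>) * (s - c) ^ (\<nu> + 1)))"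
      proof eventually_elim
        case (elim s)
        then show ?case using inv_pow_diff_id[OF assms(2), of "s - c" "\<rho> - c"] a by simp
      qed
      show "isCont (\<lambda>s. - (\<Sum>\<nu>=0..m-1. 1 / ((\<rho> - c) ^ (m - \<nu>) * (s - c) ^ (\<nu> + 1)))) t"
        using a by (intro continuous_intros) auto
    qed
    then show ?thesis by simp
  qed
  show ?thesis using part1 part2 unfolding \<rho>_def by simp
qed

end
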